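(* Let $q \in Q$ and suppose $R_q$ consists of a single simple path. Then the polytope $\bar{P}(\mathcal{C}_q) = \{ (x,y) \in [0,1]^{|N|+1} : \sum_{j \in S} x_j \ge y \ \forall S \in \mathcal{C}_q\}$ is integral, i.e., all its vertices are integral.
   Context: Let $G=(N,A)$ be a finite undirected graph with edge lengths $\ell_e > 0$, and let $d>0$ be the travel range, with $\ell_e \le d$ for every edge. A path is a sequence $r=(v_0,v_1,\dots,v_m)$, $m\ge 1$, of nodes in which consecutive nodes are joined by an edge (nodes may repeat); $r$ is simple if its nodes are distinct. For $x \in \{0,1\}^N$ ($x_j = 1$ meaning a charging station at node $j$), path $r$ is repeatedly traversable under $x$ if, letting $W=(v_0,\dots,v_m,v_{m-1},\dots,v_0)$ be the round trip along $r$ (same path out and back), at least one node of $r$ has $x_j=1$ and, in the infinite periodic repetition of $W$, the distance travelled between any two consecutive visits to nodes with a station is at most $d$. Let $Q$ be a finite set of demands; each $q\in Q$ has a finite nonempty set $R_q$ of paths. For each $q \in Q$ and $r \in R_q$, $\mathcal{D}_{q,r}\subseteq 2^N$ is a family of node sets such that for every $x \in \{0,1\}^N$: $r$ is repeatedly traversable under $x$ if and only if $\sum_{j\in S} x_j \ge 1$ for all $S \in \mathcal{D}_{q,r}$. Define $\mathcal{C}_q = \{ \bigcup_{r \in R_q} S_r : S_r \in \mathcal{D}_{q,r} \text{ for each } r \in R_q\}$. *)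

theory Defs
  imports "HOL-Analysis.Analysis"
begin

text \<open>Nodes are the elements of a finite type 'n (so N = UNIV); edges A are
  2-element node sets; lengths are given by a function on edges.\<close>

definition is_graph :: "'n set set \<Rightarrow> bool" where
  "is_graph A \<longleftrightarrow> (\<forall>e\<in>A. card e = 2)"

definition is_path :: "'n set set \<Rightarrow> 'n list \<Rightarrow> bool" where
  "is_path A r \<longleftrightarrow> length r \<ge> 2 \<and>
     (\<forall>i. Suc i < length r \<longrightarrow> {r ! i, r ! Suc i} \<in> A)"

definition is_simple_path :: "'n set set \<Rightarrow> 'n list \<Rightarrow> bool" where
  "is_simple_path A r \<longleftrightarrow> is_path A r \<and> distinct r"

definition round_trip :: "'n list \<Rightarrow> 'n list" where
  "round_trip r = r @ tl (rev r)"

definition rep_walk :: "'n list \<Rightarrow> nat \<Rightarrow> 'n" where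
  "rep_walk r k = round_trip r ! (k mod length (round_trip r))"

text \<open>Distance travelled in step k of the repeated walk (from position k to k+1).
  At the junction of two copies of W the node v0 is repeated, no edge is travelled
  and the distance is 0.\<close>
definition step_len :: "('n set \<Rightarrow> real) \<Rightarrow> 'n list \<Rightarrow> nat \<Rightarrow> real" where
  "step_len len r k = (if rep_walk r k = rep_walk r (Suc k) then 0
                     else len {rep_walk r k, rep_walk r (Suc k)})"

text \<open>Repeated traversability of path r under station set X (x_j = 1 iff j \<in> X).\<close>
definition rep_traversable ::
    "('n set \<Rightarrow> real) \<Rightarrow> real \<Rightarrow> 'n list \<Rightarrow> 'n set \<Rightarrow> bool" where
  "rep_traversable len d r X \<longleftrightarrow>
     (\<exists>j\<in>set r. j \<in> X) \<and>
     (\<forall>i j. i < j \<and> rep_walk r i \<in> X \<and> rep_walk r j \<in> X \<and>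
            (\<forall>k. i < k \<and> k < j \<longrightarrow> rep_walk r k \<notin> X)
        \<longrightarrow> (\<Sum>k=i..<j. step_len len r k) \<le> d)"

definition C_fam :: "'n list set \<Rightarrow> ('n list \<Rightarrow> 'n set set) \<Rightarrow> 'n set set" where
  "C_fam R D = {\<Union>r\<in>R. S r | S. \<forall>r\<in>R. S r \<in> D r}"

definition Pbar :: "'n::finite set set \<Rightarrow> ((real^'n) \<times> real) set" where
  "Pbar C = {(x, y). (\<forall>j. 0 \<le> x $ j \<and> x $ j \<le> 1) \<and> 0 \<le> y \<and> y \<le> 1 \<and>
                      (\<forall>S\<in>C. (\<Sum>j\<in>S. x $ j) \<ge> y)}"

definition integral_polytope :: "((real^'n::finite) \<times> real) set \<Rightarrow> bool" where
  "integral_polytope P \<longleftrightarrow>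
     (\<forall>v. v extreme_point_of P \<longrightarrow> (\<forall>j. fst v $ j \<in> \<int>) \<and> snd v \<in> \<int>)"

end

theory Submission
  imports Defs
begin

lemma frac_eq_iff: "frac (a::real) = frac b \<longleftrightarrow> a - b \<in> \<int>"
  using frac_diff_eq frac_diff_zero frac_eq_0_iff by metis

lemma Ints_diff_sym: "(a::real) - b \<in> \<int> \<longleftrightarrow> b - a \<in> \<int>"
  by (metis Ints_minus minus_diff_eq)

lemma extreme_y:
  fixes C :: "'n::finite set set"
  assumes "v extreme_point_of Pbar C"
  shows "snd v = 0 \<or> snd v = 1"
proof (rule ccontr)
  obtain x y where v: "v = (x,y)" by (cases v)
  assume ne: "\<not> (snd v = 0 \<or> snd v = 1)"
  have vP: "(x,y) \<in> Pbar C" using assms v extreme_point_of_def by blast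
  then have y: "0 < y" "y < 1" using ne v unfolding Pbar_def by auto
  have x01: "0 \<le> x$j" "x$j \<le> 1" for j using vP unfolding Pbar_def by auto
  have xS: "S \<in> C \<Longrightarrow> (\<Sum>j\<in>S. x $ j) \<ge> y" for S using vP unfolding Pbar_def by auto
  define x1 where "x1 = (\<chi> j. min 1 (x$j / y))"
  define x2 where "x2 = (\<chi> j. (x$j - y * x1$j)/(1-y))"
  have x1j: "x1$j = min 1 (x$j / y)" for j unfolding x1_def by simp
  have x2j: "x2$j = (x$j - y * x1$j)/(1-y)" for j unfolding x2_def by simp
  have p1: "(x1, 1) \<in> Pbar C"
    unfolding Pbar_def
  proof (clarsimp, intro conjI allI ballI)
    fix j show "0 \<le> x1 $ j" using x01 y by (simp add: x1j)
    show "x1 $ j \<le> 1" by (simp add: x1j)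
  next
    fix S assume S: "S \<in> C"
    have nn: "\<And>j. 0 \<le> x1 $ j" using x01 y by (simp add: x1j)
    show "1 \<le> (\<Sum>j\<in>S. x1 $ j)"
    proof (cases "\<exists>j\<in>S. x$j \<ge> y")
      case True
      then obtain j where j: "j \<in> S" "x$j \<ge> y" by blast
      have "x1$j = 1" using j y by (simp add: x1j)
      moreover have "x1$j \<le> (\<Sum>j\<in>S. x1 $ j)"
        by (rule member_le_sum) (use j nn in auto)
      ultimately show ?thesis by simp
    next
      case False
      then have "\<forall>j\<in>S. x1$j = x$j / y" using y by (auto simp: x1j)
      then have "(\<Sum>j\<in>S. x1 $ j) = (\<Sum>j\<in>S. x $ j) / y"
        by (simp add: sum_divide_distrib)
      then show ?thesis using xS[OF S] y by simp
    qed
  qed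
  have p2: "(x2, 0) \<in> Pbar C"
    unfolding Pbar_def
  proof (clarsimp, intro conjI allI ballI)
    fix j
    show "0 \<le> x2 $ j" using x01[of j] y
      by (cases "x$j \<ge> y") (auto simp: x2j x1j min_def)
    show "x2 $ j \<le> 1" using x01[of j] y
      by (cases "x$j \<ge> y") (auto simp: x2j x1j min_def divide_simps)
  next
    fix S assume S: "S \<in> C"
    have "0 \<le> x2 $ j" for j using x01[of j] y
      by (cases "x$j \<ge> y") (auto simp: x2j x1j min_def)
    then show "0 \<le> (\<Sum>j\<in>S. x2 $ j)" by (simp add: sum_nonneg)
  qed
  have eq: "(x,y) = (1-y) *\<^sub>R (x2,0) + y *\<^sub>R (x1, 1)"
  proof -
    have "x$j = (1-y) * x2$j + y * x1$j" for j using y by (simp add: x2j)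
    then show ?thesis by (simp add: vec_eq_iff)
  qed
  have "(x,y) \<in> open_segment (x2,0) (x1,1)"
    unfolding in_segment using eq y by auto
  then show False using assms v p1 p2 extreme_point_of_def by blast
qed

definition intv :: "'a list \<Rightarrow> nat \<Rightarrow> nat \<Rightarrow> 'a set" where
  "intv L a b = (\<lambda>k. L!k) ` {a..<b}"

lemma sum_intv:
  assumes "distinct L" "b \<le> length L"
  shows "(\<Sum>j\<in>intv L a b. f j) = (\<Sum>k=a..<b. f (L!k))"
  unfolding intv_def
  by (rule sum.reindex_cong[where l="(!) L"]) (use assms in \<open>auto intro!: inj_on_nth\<close>)

lemma extreme_x:
  fixes C :: "'n::finite set set" and L :: "'n list"
  assumes ext: "(x,y) extreme_point_of Pbar C"
    and y01: "y = 0 \<or> y = 1"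
    and L: "distinct L" "set L = UNIV"
    and C: "\<forall>S\<in>C. \<exists>a b. a \<le> b \<and> b \<le> length L \<and> S = intv L a b"
  shows "x $ j \<in> \<int>"
proof (rule ccontr)
  assume nj: "x $ j \<notin> \<int>"
  define n where "n = length L"
  have vP: "(x,y) \<in> Pbar C" using ext extreme_point_of_def by blast
  have x01: "0 \<le> x$j" "x$j \<le> 1" for j using vP unfolding Pbar_def by auto
  have xS: "S \<in> C \<Longrightarrow> (\<Sum>j\<in>S. x $ j) \<ge> y" for S using vP unfolding Pbar_def by auto
  have yZ: "y \<in> \<int>" using y01 by auto
  define pos where "pos j = (SOME i. i < n \<and> L!i = j)" for j
  have pos: "pos j < n \<and> L ! (pos j) = j" for j
  proof -
    have "\<exists>i. i < n \<and> L!i = j" using L(2) by (metis UNIV_I in_set_conv_nth n_def)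
    then show ?thesis unfolding pos_def by (rule someI_ex)
  qed
  have pos_nth: "i < n \<Longrightarrow> pos (L!i) = i" for i
    using pos[of "L!i"] L(1) unfolding n_def by (metis nth_eq_iff_index_eq)
  define z where "z k = (\<Sum>i=0..<k. x $ (L!i))" for k
  have zdiff: "a \<le> b \<Longrightarrow> (\<Sum>k=a..<b. x $ (L!k)) = z b - z a" for a b
    unfolding z_def using sum.atLeastLessThan_concat[of 0 a b "\<lambda>i. x $ (L!i)"] by simp
  have xz: "x $ (L!i) = z (Suc i) - z i" for i
    unfolding z_def by simp
  have z0: "z 0 = 0" unfolding z_def by simp
  obtain k0 where k0: "k0 \<le> n" "z k0 \<notin> \<int>"
  proof -
    have "z (Suc (pos j)) \<notin> \<int> \<or> z (pos j) \<notin> \<int>"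
      using nj xz[of "pos j"] pos[of j] by (metis Ints_diff)
    then show ?thesis using that pos[of j] by (metis Suc_leI less_imp_le)
  qed
  define phi where "phi = frac (z k0)"
  have phi: "0 < phi" "phi < 1" unfolding phi_def using k0 frac_eq_0_iff[of "z k0"] frac_lt_1 frac_ge_0
    by (auto simp: order_le_less)
  define g where "g k = (if frac (z k) = phi then 1 else (0::real))" for k
  define wf where "wf i = g (Suc i) - g i" for i
  define w where "w = (\<chi> j. wf (pos j))"
  have wj: "w $ (L!i) = wf i" if "i < n" for i unfolding w_def using pos_nth that by simp
  have wf_ne: "wf i \<noteq> 0 \<Longrightarrow> z (Suc i) - z i \<notin> \<int>" for i
    unfolding wf_def g_def using Ints_diff_sym by (auto simp: frac_eq_iff split: if_splits)
  have g_ne: "g b \<noteq> g a \<Longrightarrow> z b - z a \<notin> \<int>" for a b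
    unfolding g_def using Ints_diff_sym by (auto simp: frac_eq_iff split: if_splits)
  have wf_abs: "\<bar>wf i\<bar> \<le> 1" for i unfolding wf_def g_def by auto
  have gdiff_abs: "\<bar>g b - g a\<bar> \<le> 1" for a b unfolding g_def by auto
  define h where "h a b = (if z b - z a \<in> \<int> then 1 else min (frac (z b - z a)) (1 - frac (z b - z a)))" for a b
  define eps where "eps = Min ((\<lambda>(a,b). h a b) ` ({..n} \<times> {..n}))"
  have h_pos: "h a b > 0" for a b
    unfolding h_def using frac_lt_1 frac_eq_0_iff frac_ge_0 by (auto simp: order_le_less)
  have eps_pos: "eps > 0" unfolding eps_def using h_pos by (subst Min_gr_iff) auto
  have eps_le: "a \<le> n \<Longrightarrow> b \<le> n \<Longrightarrow> eps \<le> h a b" for a b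
    unfolding eps_def by (rule Min_le) auto
  have inP: "(x + c *\<^sub>R w, y) \<in> Pbar C" if c: "\<bar>c\<bar> \<le> eps" for c
    unfolding Pbar_def
  proof (clarsimp, intro conjI allI ballI)
    fix j
    let ?i = "pos j"
    have i: "?i < n" "L ! ?i = j" using pos by auto
    have wjj: "w $ j = wf ?i" using wj[OF i(1)] i(2) by simp
    have "0 \<le> x $ j + c * w $ j \<and> x $ j + c * w $ j \<le> 1"
    proof (cases "wf ?i = 0")
      case True then show ?thesis using x01[of j] wjj by simp
    next
      case False
      have nz: "x $ j \<notin> \<int>" using wf_ne[OF False] xz[of ?i] i by simp
      then have xin: "0 < x$j" "x$j < 1" using x01[of j] by (auto simp: order_le_less)
      have fr: "frac (x$j) = x$j" using xin by (simp add: frac_eq)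
      have "eps \<le> h ?i (Suc ?i)" using eps_le i by simp
      then have "eps \<le> min (x$j) (1 - x$j)" unfolding h_def using nz fr xz[of ?i] i by simp
      moreover have "\<bar>c * w $ j\<bar> \<le> eps" using c wf_abs[of ?i] wjj
        by (simp add: abs_mult mult_le_one) (metis abs_ge_zero mult_left_le c order_trans)
      ultimately show ?thesis by auto
    qed
    then show "0 \<le> x $ j + c * w $ j" "x $ j + c * w $ j \<le> 1" by auto
  next
    fix S assume S: "S \<in> C"
    then obtain a b where ab: "a \<le> b" "b \<le> n" "S = intv L a b" using C n_def by blast
    have sx: "(\<Sum>j\<in>S. x $ j) = z b - z a"
      using ab sum_intv[OF L(1), where a=a and b=b and f="\<lambda>j. x$j"] zdiff[OF ab(1)] n_def by simp
    have "(\<Sum>j\<in>S. w $ j) = (\<Sum>k=a..<b. w $ (L!k))"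
      using ab sum_intv[OF L(1), where a=a and b=b and f="\<lambda>j. w$j"] n_def by simp
    also have "\<dots> = (\<Sum>k=a..<b. wf k)" using wj ab by (intro sum.cong) auto
    also have "\<dots> = g b - g a" unfolding wf_def using sum_Suc_diff'[OF ab(1), of g] by simp
    finally have sw: "(\<Sum>j\<in>S. w $ j) = g b - g a" .
    have sum_eq: "(\<Sum>j\<in>S. x $ j + c * w $ j) = (z b - z a) + c * (g b - g a)"
      using sx sw by (simp add: sum.distrib flip: sum_distrib_left)
    have ge: "z b - z a \<ge> y" using xS[OF S] sx by simp
    show "y \<le> (\<Sum>j\<in>S. x $ j + c * w $ j)"
    proof (cases "g b = g a")
      case True then show ?thesis using sum_eq ge by simp
    next
      case False
      let ?t = "z b - z a"
      have nz: "?t \<notin> \<int>" using g_ne[OF False] .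
      obtain m where m: "y = of_int m" using yZ Ints_cases by blast
      have "of_int m \<le> ?t" using ge m by simp
      then have "m \<le> \<lfloor>?t\<rfloor>" by (simp add: le_floor_iff)
      then have "y \<le> of_int \<lfloor>?t\<rfloor>" using m by simp
      then have "?t - y \<ge> frac ?t" unfolding frac_def by simp
      moreover have "eps \<le> frac ?t" using eps_le[of a b] ab h_def nz by simp
      moreover have "\<bar>c * (g b - g a)\<bar> \<le> eps"
        using c gdiff_abs[of b a] by (simp add: abs_mult) (metis abs_ge_zero mult_left_le c order_trans)
      ultimately show ?thesis using sum_eq by auto
    qed
  qed (use y01 in auto)
  have w_ne: "w \<noteq> 0"
  proof -
    define k1 where "k1 = (LEAST k. frac (z k) = phi)"
    have k1: "frac (z k1) = phi" unfolding k1_def phi_def by (rule LeastI) simp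
    have k1le: "k1 \<le> k0" unfolding k1_def phi_def by (rule Least_le) simp
    have "k1 \<noteq> 0" proof assume "k1 = 0" then show False using k1 z0 phi by simp qed
    then obtain i where i: "k1 = Suc i" by (cases k1) auto
    have "frac (z i) \<noteq> phi" using i not_less_Least[of i "\<lambda>k. frac (z k) = phi"] k1_def by simp
    then have "wf i = 1" unfolding wf_def g_def using k1 i by simp
    moreover have "i < n" using i k1le k0 by simp
    ultimately have "w $ (L!i) = 1" using wj by simp
    then show ?thesis by auto
  qed
  have p1: "(x + eps *\<^sub>R w, y) \<in> Pbar C" using inP eps_pos by simp
  have p2: "(x + (-eps) *\<^sub>R w, y) \<in> Pbar C" using inP[of "-eps"] eps_pos by simp
  have ne: "(x + (-eps) *\<^sub>R w, y) \<noteq> (x + eps *\<^sub>R w, y)"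
  proof
    assume "(x + (-eps) *\<^sub>R w, y) = (x + eps *\<^sub>R w, y)"
    then have "eps *\<^sub>R w - (-eps) *\<^sub>R w = 0" by simp
    then have "(eps - (-eps)) *\<^sub>R w = 0" by (simp only: scaleR_left_diff_distrib)
    then show False using w_ne eps_pos by simp
  qed
  have "(x,y) = (1 - 1/2) *\<^sub>R (x + (-eps) *\<^sub>R w, y) + (1/2) *\<^sub>R (x + eps *\<^sub>R w, y)"
    by (simp add: vec_eq_iff algebra_simps)
  then have "(x,y) \<in> open_segment (x + (-eps) *\<^sub>R w, y) (x + eps *\<^sub>R w, y)"
    unfolding in_segment using ne by (intro conjI exI[of _ "1/2"]) auto
  then show False using ext p1 p2 extreme_point_of_def by blast
qed

lemma interval_integral:
  fixes C :: "'n::finite set set" and L :: "'n list"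
  assumes L: "distinct L" "set L = UNIV"
    and C: "\<forall>S\<in>C. \<exists>a b. a \<le> b \<and> b \<le> length L \<and> S = intv L a b"
  shows "integral_polytope (Pbar C)"
  unfolding integral_polytope_def
proof (intro allI impI conjI)
  fix v assume v: "v extreme_point_of Pbar C"
  obtain x y where xy: "v = (x,y)" by (cases v)
  have y: "y = 0 \<or> y = 1" using extreme_y[OF v] xy by simp
  then show "snd v \<in> \<int>" using xy by auto
  fix j show "fst v $ j \<in> \<int>" using extreme_x[of x y C L j] v xy y L C by simp
qed

definition posf :: "nat \<Rightarrow> nat \<Rightarrow> nat" where
  "posf n t = (if t < n then t else 2*n - 2 - t)"

lemma rep_walk_eq:
  assumes "length r \<ge> 2"
  shows "rep_walk r k = r ! posf (length r) (k mod (2 * length r - 1))"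
proof -
  let ?n = "length r"
  have len: "length (round_trip r) = 2 * ?n - 1" unfolding round_trip_def using assms by simp
  let ?t = "k mod (2 * ?n - 1)"
  have t: "?t < 2 * ?n - 1" using assms by simp
  have "round_trip r ! ?t = r ! posf ?n ?t"
  proof (cases "?t < ?n")
    case True then show ?thesis unfolding round_trip_def posf_def by (simp add: nth_append)
  next
    case False
    then have "round_trip r ! ?t = tl (rev r) ! (?t - ?n)" unfolding round_trip_def by (simp add: nth_append)
    also have "\<dots> = rev r ! Suc (?t - ?n)"
    proof -
      have "?t - ?n < length (tl (rev r))" using t False by simp
      then show ?thesis by (rule nth_tl)
    qed
    also have "\<dots> = r ! (?n - Suc (Suc (?t - ?n)))"
    proof -
      have "Suc (?t - ?n) < length r" using t False by simp
      then show ?thesis by (simp add: rev_nth)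
    qed
    also have "?n - Suc (Suc (?t - ?n)) = posf ?n ?t" unfolding posf_def using False t by simp
    finally show ?thesis .
  qed
  then show ?thesis unfolding rep_walk_def len .
qed

lemma posf_step:
  assumes "n \<ge> 2"
  defines "F \<equiv> \<lambda>k. posf n (k mod (2*n - 1))"
  shows "F (Suc k) \<le> F k + 1 \<and> F k \<le> F (Suc k) + 1"
proof -
  let ?M = "2*n - 1"
  define t where "t = k mod ?M"
  have t: "t < ?M" using assms unfolding t_def by simp
  show ?thesis
  proof (cases "Suc t = ?M")
    case True
    then have "Suc k mod ?M = 0" unfolding t_def by (simp add: mod_Suc)
    moreover have "posf n t = 0" using True assms(1) unfolding posf_def by (cases "t < n") auto
    moreover have "posf n 0 = 0" using assms(1) unfolding posf_def by simp
    ultimately show ?thesis unfolding F_def t_def by simp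
  next
    case False
    then have e: "Suc k mod ?M = Suc t" unfolding t_def by (simp add: mod_Suc)
    have "posf n (Suc t) \<le> posf n t + 1 \<and> posf n t \<le> posf n (Suc t) + 1"
      unfolding posf_def using t assms(1) False by auto
    then show ?thesis unfolding F_def e t_def[symmetric] by simp
  qed
qed

lemma posf_lt:
  assumes "n \<ge> 2" shows "posf n (k mod (2*n - 1)) < n"
proof -
  have "k mod (2*n-1) < 2*n - 1" using assms by simp
  then show ?thesis unfolding posf_def using assms by auto
qed

lemma ivt_nat:
  fixes f :: "nat \<Rightarrow> nat"
  assumes st: "\<And>k. f (Suc k) \<le> f k + 1 \<and> f k \<le> f (Suc k) + 1"
  shows "k1 \<le> k2 \<Longrightarrow> min (f k1) (f k2) \<le> v \<Longrightarrow> v \<le> max (f k1) (f k2) \<Longrightarrow>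
    \<exists>k. k1 \<le> k \<and> k \<le> k2 \<and> f k = v"
proof (induction k2)
  case 0 then show ?case by auto
next
  case (Suc k2)
  show ?case
  proof (cases "k1 = Suc k2")
    case True then show ?thesis using Suc.prems by auto
  next
    case False
    then have k1: "k1 \<le> k2" using Suc.prems by auto
    show ?thesis
    proof (cases "min (f k1) (f k2) \<le> v \<and> v \<le> max (f k1) (f k2)")
      case True then obtain k where "k1 \<le> k \<and> k \<le> k2 \<and> f k = v" using Suc.IH k1 by blast
      then show ?thesis by (intro exI[of _ k]) auto
    next
      case False
      then have "f (Suc k2) = v" using Suc.prems st[of k2] by (auto simp: min_def max_def split: if_splits)
      then show ?thesis using Suc.prems by auto
    qed
  qed
qed

lemma image_interval:
  fixes f :: "nat \<Rightarrow> nat"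
  assumes st: "\<And>k. f (Suc k) \<le> f k + 1 \<and> f k \<le> f (Suc k) + 1"
    and T: "T = {i<..<j}" "T \<noteq> {}"
  shows "f ` T = {Min (f ` T) .. Max (f ` T)}"
proof
  have fin: "finite (f ` T)" using T by simp
  show "f ` T \<subseteq> {Min (f ` T) .. Max (f ` T)}" using fin by auto
  show "{Min (f ` T) .. Max (f ` T)} \<subseteq> f ` T"
  proof
    fix v assume v: "v \<in> {Min (f ` T) .. Max (f ` T)}"
    have "Min (f ` T) \<in> f ` T" using fin T(2) Min_in by blast
    then obtain k1 where k1: "k1 \<in> T" "f k1 = Min (f ` T)" by auto
    have "Max (f ` T) \<in> f ` T" using fin T(2) Max_in by blast
    then obtain k2 where k2: "k2 \<in> T" "f k2 = Max (f ` T)" by auto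
    have "\<exists>k. min k1 k2 \<le> k \<and> k \<le> max k1 k2 \<and> f k = v"
    proof (cases "k1 \<le> k2")
      case True then show ?thesis using ivt_nat[where f=f, OF st, of k1 k2 v] v k1 k2 by auto
    next
      case False then show ?thesis using ivt_nat[where f=f, OF st, of k2 k1 v] v k1 k2 by auto
    qed
    then obtain k where "min k1 k2 \<le> k" "k \<le> max k1 k2" "f k = v" by blast
    moreover have "k \<in> T" using calculation k1(1) k2(1) T(1) by auto
    ultimately show "v \<in> f ` T" by blast
  qed
qed

lemma key:
  assumes n2: "length r \<ge> 2" and nt: "\<not> rep_traversable len d r X"
  shows "\<exists>a b. a \<le> b \<and> b \<le> length r \<and> intv r a b \<inter> X = {} \<and>
           \<not> rep_traversable len d r (- intv r a b)"
proof (cases "\<exists>j\<in>set r. j \<in> X")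
  case False
  have "intv r 0 (length r) = set r" unfolding intv_def by (auto simp: set_conv_nth)
  then show ?thesis using False unfolding rep_traversable_def by (intro exI[of _ 0] exI[of _ "length r"]) auto
next
  case True
  then obtain i j where ij: "i < j" "rep_walk r i \<in> X" "rep_walk r j \<in> X"
    "\<forall>k. i < k \<and> k < j \<longrightarrow> rep_walk r k \<notin> X"
    "\<not> (\<Sum>k=i..<j. step_len len r k) \<le> d"
    using nt unfolding rep_traversable_def by blast
  define T where "T = {i<..<j}"
  define I where "I = rep_walk r ` T"
  have IX: "I \<inter> X = {}" using ij(4) unfolding I_def T_def by auto
  have nt2: "\<not> rep_traversable len d r (- I)"
  proof -
    have "rep_walk r i \<notin> I" using IX ij(2) by blast
    moreover have "rep_walk r j \<notin> I" using IX ij(3) by blast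
    moreover have "\<forall>k. i < k \<and> k < j \<longrightarrow> rep_walk r k \<notin> - I" unfolding I_def T_def by auto
    ultimately show ?thesis unfolding rep_traversable_def using ij(1,5) by blast
  qed
  have "\<exists>a b. a \<le> b \<and> b \<le> length r \<and> intv r a b = I"
  proof (cases "T = {}")
    case True then show ?thesis unfolding I_def intv_def by (intro exI[of _ 0] exI[of _ 0]) auto
  next
    case False
    define F where "F = (\<lambda>k. posf (length r) (k mod (2 * length r - 1)))"
    have st: "\<And>k. F (Suc k) \<le> F k + 1 \<and> F k \<le> F (Suc k) + 1"
      unfolding F_def using posf_step[OF n2] by blast
    define lo where "lo = Min (F ` T)"
    define hi where "hi = Max (F ` T)"
    have FT: "F ` T = {lo .. hi}" unfolding lo_def hi_def using image_interval[where f=F, OF st T_def False] .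
    have hi: "hi < length r"
      using False T_def posf_lt[OF n2] unfolding F_def hi_def by (subst Max_less_iff) auto
    have rw: "\<And>k. rep_walk r k = r ! F k" unfolding F_def using rep_walk_eq[OF n2] by blast
    have "I = (\<lambda>k. r ! k) ` (F ` T)" by (simp add: I_def rw image_image)
    also have "\<dots> = intv r lo (Suc hi)" unfolding intv_def FT
      by (simp add: atLeastLessThanSuc_atLeastAtMost)
    finally show ?thesis using hi FT False
      by (intro exI[of _ lo] exI[of _ "Suc hi"]) auto
  qed
  then show ?thesis using IX nt2 by auto
qed


theorem proposition2:
  fixes A :: "'n::finite set set"
    and len :: "'n set \<Rightarrow> real"
    and d :: real
    and R :: "'n list set"
    and D :: "'n list \<Rightarrow> 'n set set"
    and r :: "'n list"
  assumes graph: "is_graph A"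
    and len_pos: "\<forall>e\<in>A. len e > 0"
    and d_pos: "d > 0"
    and len_le: "\<forall>e\<in>A. len e \<le> d"
    and paths: "\<forall>p\<in>R. is_path A p"
    and single: "R = {r}"
    and simple: "is_simple_path A r"
    and D_char: "\<forall>p\<in>R. \<forall>X::'n set.
                   rep_traversable len d p X \<longleftrightarrow> (\<forall>S\<in>D p. S \<inter> X \<noteq> {})"
  shows "integral_polytope (Pbar (C_fam R D))"
proof -
  have Dc: "rep_traversable len d r X \<longleftrightarrow> (\<forall>S\<in>D r. S \<inter> X \<noteq> {})" for X
    using D_char single by auto
  have CD: "C_fam R D = D r"
  proof
    show "C_fam R D \<subseteq> D r" unfolding C_fam_def single by auto
    show "D r \<subseteq> C_fam R D" unfolding C_fam_def single
    proof
      fix T assume "T \<in> D r"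
      then show "T \<in> {\<Union>p\<in>{r}. S p |S. \<forall>p\<in>{r}. S p \<in> D p}"
        by (intro CollectI exI[of _ "\<lambda>_. T"]) auto
    qed
  qed
  have n2: "length r \<ge> 2" and dr: "distinct r"
    using simple unfolding is_simple_path_def is_path_def by auto
  obtain L0 :: "'n list" where L0: "set L0 = UNIV" "distinct L0"
    using finite_distinct_list[of "UNIV :: 'n set"] by auto
  define L where "L = r @ filter (\<lambda>j. j \<notin> set r) L0"
  have L: "distinct L" "set L = UNIV" unfolding L_def using L0 dr by auto
  have lenL: "length r \<le> length L" unfolding L_def by simp
  have intvL: "b \<le> length r \<Longrightarrow> intv L a b = intv r a b" for a b
    unfolding intv_def L_def by (intro image_cong) (auto simp: nth_append)
  define C' where "C' = {I. \<exists>a b. a \<le> b \<and> b \<le> length r \<and> I = intv r a b \<and> (\<exists>S\<in>D r. S \<subseteq> I)}"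
  have mono: "(x, y) \<in> Pbar C0 \<Longrightarrow> S \<subseteq> T \<Longrightarrow> (\<Sum>j\<in>S. x $ j) \<le> (\<Sum>j\<in>T. x $ j)" for x y C0 and S T :: "'n set"
    unfolding Pbar_def by (intro sum_mono2) auto
  have PP: "Pbar (D r) = Pbar C'"
  proof
    show "Pbar (D r) \<subseteq> Pbar C'"
    proof
      fix p assume p: "p \<in> Pbar (D r)"
      obtain x y where xy: "p = (x,y)" by (cases p)
      have "\<forall>I\<in>C'. (\<Sum>j\<in>I. x $ j) \<ge> y"
      proof
        fix I assume "I \<in> C'"
        then obtain S where S: "S \<in> D r" "S \<subseteq> I" unfolding C'_def by blast
        have "y \<le> (\<Sum>j\<in>S. x $ j)" using p xy S(1) unfolding Pbar_def by auto
        also have "\<dots> \<le> (\<Sum>j\<in>I. x $ j)" using mono p xy S(2) by blast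
        finally show "(\<Sum>j\<in>I. x $ j) \<ge> y" .
      qed
      then show "p \<in> Pbar C'" using p xy unfolding Pbar_def by auto
    qed
    show "Pbar C' \<subseteq> Pbar (D r)"
    proof
      fix p assume p: "p \<in> Pbar C'"
      obtain x y where xy: "p = (x,y)" by (cases p)
      have "\<forall>S\<in>D r. (\<Sum>j\<in>S. x $ j) \<ge> y"
      proof
        fix S assume S: "S \<in> D r"
        have "\<not> rep_traversable len d r (- S)" using Dc S by blast
        then obtain a b where ab: "a \<le> b" "b \<le> length r" "intv r a b \<inter> - S = {}"
          "\<not> rep_traversable len d r (- intv r a b)"
          using key[OF n2] by blast
        obtain S' where S': "S' \<in> D r" "S' \<inter> - intv r a b = {}" using ab(4) Dc by blast
        have "intv r a b \<in> C'" unfolding C'_def using ab S' by blast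
        then have "y \<le> (\<Sum>j\<in>intv r a b. x $ j)" using p xy unfolding Pbar_def by auto
        also have "\<dots> \<le> (\<Sum>j\<in>S. x $ j)" using mono p xy ab(3) by blast
        finally show "(\<Sum>j\<in>S. x $ j) \<ge> y" .
      qed
      then show "p \<in> Pbar (D r)" using p xy unfolding Pbar_def by auto
    qed
  qed
  have C'int: "\<forall>S\<in>C'. \<exists>a b. a \<le> b \<and> b \<le> length L \<and> S = intv L a b"
  proof
    fix S assume "S \<in> C'"
    then obtain a b where ab: "a \<le> b" "b \<le> length r" "S = intv r a b" unfolding C'_def by blast
    then show "\<exists>a b. a \<le> b \<and> b \<le> length L \<and> S = intv L a b"
      using intvL[of b a] lenL by (intro exI[of _ a] exI[of _ b]) auto
  qed
  show ?thesis unfolding CD PP by (rule interval_integral[OF L C'int])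
qed

end
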